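(* Let $N\ge3$ and let $\|\cdot\|:\mathbb{C}^N\to\mathbb{R}$ be a norm that is permutation-invariant (i.e. $\|\mathbf{v}\|$ is unchanged by permuting the components of $\mathbf{v}$), satisfies $\|(1,1)\|\neq1$, and satisfies \[ \|\mathbf{v}+\mathbf{w}\|=\big\|\big(\|\mathbf{v}\|,\|\mathbf{w}\|\big)\big\| \] for all $\mathbf{v},\mathbf{w}\in\mathbb{C}^N$ with disjoint supports. Then there exists a real number $p\ge1$ such that for every vector $\mathbf{c}\in\mathbb{C}^N$ whose components all have rational absolute values, \[ \|\mathbf{c}\|=\Big(\sum_{i=1}^N|c_i|^p\Big)^{1/p}. \]
   Context: Vectors with fewer than $N$ entries are identified with vectors in $\mathbb{C}^N$ by padding with zeros; e.g. $(a,b)$ denotes $(a,b,0,\dots,0)\in\mathbb{C}^N$ and $(1,1)=(1,1,0,\dots,0)$. The support of a vector is the set of indices of its nonzero components. *)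

theory Defs
  imports "HOL-Analysis.Analysis" "HOL-Combinatorics.Permutations"
begin

text \<open>Vectors of \<complex>^N are represented as functions nat \<Rightarrow> complex vanishing from index N on.\<close>
definition cvec :: "nat \<Rightarrow> (nat \<Rightarrow> complex) set" where
  "cvec N = {v. \<forall>i\<ge>N. v i = 0}"

definition vsupp :: "(nat \<Rightarrow> complex) \<Rightarrow> nat set" where
  "vsupp v = {i. v i \<noteq> 0}"

definition pair2 :: "complex \<Rightarrow> complex \<Rightarrow> (nat \<Rightarrow> complex)" where
  "pair2 a b = (\<lambda>i. if i = 0 then a else if i = 1 then b else 0)"

definition is_norm_on :: "nat \<Rightarrow> ((nat \<Rightarrow> complex) \<Rightarrow> real) \<Rightarrow> bool" where
  "is_norm_on N f \<longleftrightarrow>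
     (\<forall>v\<in>cvec N. f v \<ge> 0) \<and>
     (\<forall>v\<in>cvec N. f v = 0 \<longleftrightarrow> v = (\<lambda>_. 0)) \<and>
     (\<forall>v\<in>cvec N. \<forall>c::complex. f (\<lambda>i. c * v i) = cmod c * f v) \<and>
     (\<forall>v\<in>cvec N. \<forall>w\<in>cvec N. f (\<lambda>i. v i + w i) \<le> f v + f w)"

definition perm_invariant :: "nat \<Rightarrow> ((nat \<Rightarrow> complex) \<Rightarrow> real) \<Rightarrow> bool" where
  "perm_invariant N f \<longleftrightarrow>
     (\<forall>\<sigma>. \<sigma> permutes {..<N} \<longrightarrow> (\<forall>v\<in>cvec N. f (v \<circ> \<sigma>) = f v))"

end

theory Submission
  imports Defs
begin


lemma pos_rat_nat:
  assumes "(q::real) \<in> \<rat>" "q > 0"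
  shows "\<exists>j k::nat. k > 0 \<and> q = real j / real k"
proof -
  obtain a b where ab: "b > 0" "q = of_int a / of_int b" using Rats_cases'[OF assms(1)] by blast
  have "a > 0" using ab assms(2) by (smt (verit, best) divide_nonpos_pos of_int_0_less_iff)
  then show ?thesis using ab by (intro exI[of _ "nat a"] exI[of _ "nat b"]) auto
qed

lemma cross:
  fixes \<alpha> \<beta> \<gamma> \<delta> :: real
  assumes "\<alpha> \<ge> 0" "\<beta> \<ge> 0" "\<gamma> > 0" "\<delta> > 0"
    and H1: "\<And>(j::nat) (k::nat). k > (0::nat) \<Longrightarrow> k*\<beta> \<le> j*\<delta> \<Longrightarrow> k*\<alpha> \<le> j*\<gamma>"
    and H2: "\<And>(j::nat) (k::nat). k > (0::nat) \<Longrightarrow> j*\<delta> \<le> k*\<beta> \<Longrightarrow> j*\<gamma> \<le> k*\<alpha>"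
  shows "\<alpha>/\<gamma> = \<beta>/\<delta>"
proof (rule ccontr)
  assume ne: "\<alpha>/\<gamma> \<noteq> \<beta>/\<delta>"
  show False
  proof (cases "\<alpha>/\<gamma> < \<beta>/\<delta>")
    case True
    then obtain q where q: "q \<in> \<rat>" "\<alpha>/\<gamma> < q" "q < \<beta>/\<delta>" using Rats_dense_in_real by blast
    have "q > 0" using q assms by (smt (verit) divide_nonneg_pos)
    then obtain j k :: nat where jk: "k > 0" "q = j / k" using pos_rat_nat q by blast
    have "j*\<delta> < k*\<beta>" using q(3) jk assms by (simp add: field_simps)
    then have "j*\<gamma> \<le> k*\<alpha>" using H2 jk by simp
    then have "j/k \<le> \<alpha>/\<gamma>" using jk assms by (simp add: field_simps)
    then show False using q jk by simp
  next
    case False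
    then have lt: "\<beta>/\<delta> < \<alpha>/\<gamma>" using ne by simp
    then obtain q where q: "q \<in> \<rat>" "\<beta>/\<delta> < q" "q < \<alpha>/\<gamma>" using Rats_dense_in_real by blast
    have "q > 0" using q assms by (smt (verit) divide_nonneg_pos)
    then obtain j k :: nat where jk: "k > 0" "q = j / k" using pos_rat_nat q by blast
    have "k*\<beta> < j*\<delta>" using q(2) jk assms by (simp add: field_simps)
    then have "k*\<alpha> \<le> j*\<gamma>" using H1 jk by simp
    then have "\<alpha>/\<gamma> \<le> j/k" using jk assms by (simp add: field_simps)
    then show False using q jk by simp
  qed
qed

fun sq :: "(real \<Rightarrow> real \<Rightarrow> real) \<Rightarrow> nat \<Rightarrow> real" where
  "sq g 0 = 0" | "sq g (Suc n) = g (sq g n) 1"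

lemma core:
  fixes g :: "real \<Rightarrow> real \<Rightarrow> real"
  assumes nn: "\<And>x y. 0\<le>x \<Longrightarrow> 0\<le>y \<Longrightarrow> 0 \<le> g x y"
    and comm: "\<And>x y. g x y = g y x"
    and assoc: "\<And>x y z. 0\<le>x \<Longrightarrow> 0\<le>y \<Longrightarrow> 0\<le>z \<Longrightarrow> g (g x y) z = g x (g y z)"
    and gid: "\<And>x. 0\<le>x \<Longrightarrow> g x 0 = x"
    and hom: "\<And>t x y. 0\<le>t \<Longrightarrow> 0\<le>x \<Longrightarrow> 0\<le>y \<Longrightarrow> g (t*x) (t*y) = t * g x y"
    and mono: "\<And>x x' y. 0\<le>x \<Longrightarrow> x\<le>x' \<Longrightarrow> 0\<le>y \<Longrightarrow> g x y \<le> g x' y"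
    and g11: "g 1 1 \<noteq> 1" "g 1 1 \<le> 2"
  shows "\<exists>p\<ge>1. \<forall>x y. 0\<le>x \<longrightarrow> 0\<le>y \<longrightarrow> g x y = (x powr p + y powr p) powr (1/p)"
proof -
  let ?s = "sq g"
  have mono2: "g x y \<le> g x' y'" if "0\<le>x" "x\<le>x'" "0\<le>y" "y\<le>y'" for x x' y y'
  proof -
    have "g x y \<le> g x' y" using mono that by simp
    also have "\<dots> = g y x'" by (rule comm)
    also have "\<dots> \<le> g y' x'" using mono that by simp
    finally show ?thesis by (simp add: comm)
  qed
  have s_nn: "0 \<le> ?s n" for n by (induction n) (auto intro: nn)
  have s_add: "?s (m+n) = g (?s m) (?s n)" for m n
    by (induction n) (auto simp: gid s_nn assoc)
  have s_mult: "?s (m*n) = ?s m * ?s n" for m n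
  proof (induction m)
    case 0 then show ?case by simp
  next
    case (Suc m)
    have "?s (Suc m * n) = ?s (n + m*n)" by simp
    also have "\<dots> = g (?s n * 1) (?s n * ?s m)" using s_add Suc by (simp add: mult.commute)
    also have "\<dots> = ?s n * g 1 (?s m)" using hom[of "?s n" 1 "?s m"] s_nn by simp
    finally show ?case by (simp add: comm mult.commute)
  qed
  have s_suc: "?s n \<le> ?s (Suc n)" for n
    using mono2[of "?s n" "?s n" 0 1] s_nn gid by simp
  have s_mono: "m \<le> n \<Longrightarrow> ?s m \<le> ?s n" for m n
  proof (induction n rule: dec_induct)
    case (step n) then show ?case using s_suc[of n] by linarith
  qed simp
  have s1: "?s 1 = 1"
  proof -
    have "?s 1 = g 0 1" by simp
    also have "\<dots> = g 1 0" by (rule comm)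
    also have "\<dots> = 1" by (rule gid) simp
    finally show ?thesis .
  qed
  have g01: "g 0 1 = 1" using s1 by simp
  have s2: "?s 2 = g 1 1" by (metis Suc_1 s1 sq.simps(2))
  have s2gt: "?s 2 > 1" using mono2[of 1 1 0 1] gid[of 1] g11 s2 by simp
  have s_pos: "n \<ge> 1 \<Longrightarrow> ?s n \<ge> 1" for n using s_mono[of 1 n] s1 g01 by simp
  have s_pow: "?s (n^k) = ?s n ^ k" for n k by (induction k) (auto simp: s_mult g01)
  define r where "r = ln (?s 2) / ln 2"
  have r_pos: "r > 0" using s2gt by (simp add: r_def)
  have r_le: "r \<le> 1" using s2gt g11 s2 by (simp add: r_def)
  have s_eq: "?s n = real n powr r" for n
  proof (cases "n = 0")
    case True then show ?thesis by simp
  next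
    case False
    then have n1: "n \<ge> 1" by simp
    have "ln (?s n) / ln (?s 2) = ln (real n) / ln 2"
    proof (rule cross)
      show "0 \<le> ln (?s n)" using s_pos[OF n1] by simp
      show "0 \<le> ln (real n)" using n1 by simp
      show "0 < ln (?s 2)" using s2gt by simp
      show "(0::real) < ln 2" by simp
    next
      fix j k :: nat assume "k > 0" "real k * ln (real n) \<le> real j * ln 2"
      then have "ln (real n ^ k) \<le> ln (2 ^ j)" using n1 by (simp add: ln_realpow)
      then have "real n ^ k \<le> 2 ^ j" using n1 by (subst (asm) ln_le_cancel_iff) auto
      then have "real (n ^ k) \<le> real (2 ^ j)" by simp
      then have "n ^ k \<le> 2 ^ j" by (simp only: of_nat_le_iff)
      then have "?s n ^ k \<le> ?s 2 ^ j" using s_mono[of "n^k" "2^j"] by (simp only: s_pow)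
      then have "ln (?s n ^ k) \<le> ln (?s 2 ^ j)" using s_pos[OF n1] s2gt by (subst ln_le_cancel_iff) auto
      then show "real k * ln (?s n) \<le> real j * ln (?s 2)" using s_pos[OF n1] s2gt by (simp add: ln_realpow)
    next
      fix j k :: nat assume "k > 0" "real j * ln 2 \<le> real k * ln (real n)"
      then have "ln (2 ^ j) \<le> ln (real n ^ k)" using n1 by (simp add: ln_realpow)
      then have "2 ^ j \<le> real n ^ k" using n1 by (subst (asm) ln_le_cancel_iff) auto
      then have "real (2 ^ j) \<le> real (n ^ k)" by simp
      then have "2 ^ j \<le> n ^ k" by (simp only: of_nat_le_iff)
      then have "?s 2 ^ j \<le> ?s n ^ k" using s_mono[of "2^j" "n^k"] by (simp only: s_pow)
      then have "ln (?s 2 ^ j) \<le> ln (?s n ^ k)" using s_pos[OF n1] s2gt by (subst ln_le_cancel_iff) auto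
      then show "real j * ln (?s 2) \<le> real k * ln (?s n)" using s_pos[OF n1] s2gt by (simp add: ln_realpow)
    qed
    then have "ln (?s n) = r * ln (real n)" using s2gt by (simp add: r_def field_simps)
    then have "?s n = exp (r * ln (real n))" using s_pos[OF n1] by (metis exp_ln less_le_trans zero_less_one)
    then show ?thesis using n1 by (simp add: powr_def)
  qed
  define p where "p = 1 / r"
  have p1: "p \<ge> 1" using r_pos r_le by (simp add: p_def)
  have pr: "(z powr r) powr p = z" if "z \<ge> 0" for z
    using that r_pos by (simp add: powr_powr p_def)
  have rp: "(z powr p) powr r = z" if "z \<ge> 0" for z
    using that r_pos by (simp add: powr_powr p_def)
  have gq: "g ((real a / real q) powr r) ((real b / real q) powr r) = ((real a + real b) / real q) powr r"
    if "q > 0" for a b q :: nat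
  proof -
    define t where "t = 1 / real q powr r"
    have t0: "t \<ge> 0" by (simp add: t_def)
    have "g ((real a / real q) powr r) ((real b / real q) powr r) = g (t * ?s a) (t * ?s b)"
      by (simp add: s_eq t_def powr_divide)
    also have "\<dots> = t * ?s (a + b)" using hom t0 s_nn s_add by simp
    also have "\<dots> = ((real a + real b) / real q) powr r" by (simp add: s_eq t_def powr_divide)
    finally show ?thesis .
  qed
  have main: "g x y = (x powr p + y powr p) powr (1/p)" if x0: "0 \<le> x" and y0: "0 \<le> y" for x y
  proof -
    define X where "X = x powr p"
    define Y where "Y = y powr p"
    define G where "G = g x y"
    have X0: "X \<ge> 0" and Y0: "Y \<ge> 0" by (auto simp: X_def Y_def)
    have G0: "G \<ge> 0" using nn x0 y0 by (simp add: G_def)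
    have xX: "X powr r = x" using rp x0 by (simp add: X_def)
    have yY: "Y powr r = y" using rp y0 by (simp add: Y_def)
    have bound: "\<bar>G powr p - (X + Y)\<bar> \<le> 2 / real q" if q0: "q > 0" for q :: nat
    proof -
      have fl: "\<exists>a::nat. real a \<le> z \<and> z < real a + 1" if "z \<ge> 0" for z :: real
        using that by (intro exI[of _ "nat \<lfloor>z\<rfloor>"]) linarith
      have cl: "\<exists>a::nat. z \<le> real a \<and> real a < z + 1" if "z \<ge> 0" for z :: real
        using that by (intro exI[of _ "nat \<lceil>z\<rceil>"]) linarith
      obtain a where a: "real a \<le> q*X" "q*X < real a + 1" using fl X0 by (meson mult_nonneg_nonneg of_nat_0_le_iff)
      obtain b where b: "real b \<le> q*Y" "q*Y < real b + 1" using fl Y0 by (meson mult_nonneg_nonneg of_nat_0_le_iff)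
      obtain a' where a': "q*X \<le> real a'" "real a' < q*X + 1" using cl X0 by (meson mult_nonneg_nonneg of_nat_0_le_iff)
      obtain b' where b': "q*Y \<le> real b'" "real b' < q*Y + 1" using cl Y0 by (meson mult_nonneg_nonneg of_nat_0_le_iff)
      have qpos: "real q > 0" using q0 by simp
      have le1: "(real a / real q) powr r \<le> x"
      proof -
        have "real a / real q \<le> X" using a qpos by (simp add: divide_le_eq mult.commute)
        then have "(real a / real q) powr r \<le> X powr r" by (intro powr_mono2) (use r_pos in auto)
        then show ?thesis using xX by simp
      qed
      have le2: "(real b / real q) powr r \<le> y"
      proof -
        have "real b / real q \<le> Y" using b qpos by (simp add: divide_le_eq mult.commute)
        then have "(real b / real q) powr r \<le> Y powr r" by (intro powr_mono2) (use r_pos in auto)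
        then show ?thesis using yY by simp
      qed
      have ge1: "x \<le> (real a' / real q) powr r"
      proof -
        have "X \<le> real a' / real q" using a' qpos by (simp add: le_divide_eq mult.commute)
        then have "X powr r \<le> (real a' / real q) powr r" using X0 by (intro powr_mono2) (use r_pos in auto)
        then show ?thesis using xX by simp
      qed
      have ge2: "y \<le> (real b' / real q) powr r"
      proof -
        have "Y \<le> real b' / real q" using b' qpos by (simp add: le_divide_eq mult.commute)
        then have "Y powr r \<le> (real b' / real q) powr r" using Y0 by (intro powr_mono2) (use r_pos in auto)
        then show ?thesis using yY by simp
      qed
      have ab0: "(real a + real b) / real q \<ge> 0" and ab0': "(real a' + real b') / real q \<ge> 0" by auto
      have "((real a + real b) / real q) powr r \<le> G"
        using gq[OF q0, of a b] mono2[OF _ le1 _ le2] by (simp add: G_def)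
      then have "(((real a + real b) / real q) powr r) powr p \<le> G powr p"
        by (intro powr_mono2) (use p1 in auto)
      then have L: "(real a + real b) / real q \<le> G powr p" using pr[OF ab0] by simp
      have "G \<le> ((real a' + real b') / real q) powr r"
        using gq[OF q0, of a' b'] mono2[OF x0 ge1 y0 ge2] by (simp add: G_def)
      then have "G powr p \<le> (((real a' + real b') / real q) powr r) powr p"
        by (intro powr_mono2) (use p1 G0 in auto)
      then have U: "G powr p \<le> (real a' + real b') / real q" using pr[OF ab0'] by simp
      have e1: "(real a + real b) / real q - (X + Y - 2 / real q) = (real a + real b + 2 - q*X - q*Y) / real q"
        using qpos by (simp add: field_simps)
      have "(real a + real b + 2 - q*X - q*Y) / real q \<ge> 0" using a b qpos by simp
      then have "X + Y - 2 / real q \<le> (real a + real b) / real q" using e1 by linarith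
      moreover
      have e2: "X + Y + 2 / real q - (real a' + real b') / real q = (q*X + q*Y + 2 - real a' - real b') / real q"
        using qpos by (simp add: field_simps)
      have "(q*X + q*Y + 2 - real a' - real b') / real q \<ge> 0" using a' b' qpos by simp
      then have "(real a' + real b') / real q \<le> X + Y + 2 / real q" using e2 by linarith
      ultimately show ?thesis using L U by linarith
    qed
    have eq: "G powr p = X + Y"
    proof (rule ccontr)
      assume "G powr p \<noteq> X + Y"
      then have d: "\<bar>G powr p - (X + Y)\<bar> > 0" by simp
      obtain q :: nat where q: "real q > 2 / \<bar>G powr p - (X + Y)\<bar>" using reals_Archimedean2 by blast
      have "2 / \<bar>G powr p - (X + Y)\<bar> > 0" using d by simp
      then have qp: "real q > 0" using q by linarith
      then have "q > 0" by simp
      then have "\<bar>G powr p - (X + Y)\<bar> \<le> 2 / real q" by (rule bound)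
      then have A: "\<bar>G powr p - (X + Y)\<bar> * real q \<le> 2" using qp by (simp add: le_divide_eq)
      have B: "2 < real q * \<bar>G powr p - (X + Y)\<bar>" using q d by (simp add: divide_less_eq)
      show False using A B by (simp add: mult.commute)
    qed
    have "G = (G powr p) powr r" using pr G0 rp by simp
    then show ?thesis using eq by (simp add: G_def X_def Y_def p_def)
  qed
  show ?thesis using p1 main by blast
qed



theorem theorem6:
  fixes N :: nat and f :: "(nat \<Rightarrow> complex) \<Rightarrow> real"
  assumes "N \<ge> 3"
    and "is_norm_on N f"
    and "perm_invariant N f"
    and "f (pair2 1 1) \<noteq> 1"
    and "\<forall>v\<in>cvec N. \<forall>w\<in>cvec N. vsupp v \<inter> vsupp w = {} \<longrightarrow>
           f (\<lambda>i. v i + w i) = f (pair2 (complex_of_real (f v)) (complex_of_real (f w)))"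
  shows "\<exists>p::real. p \<ge> 1 \<and>
           (\<forall>c\<in>cvec N. (\<forall>i<N. cmod (c i) \<in> \<rat>) \<longrightarrow>
              f c = (\<Sum>i<N. cmod (c i) powr p) powr (1 / p))"
proof -
  have N3: "N \<ge> 3" by fact
  have nonneg: "\<And>v. v \<in> cvec N \<Longrightarrow> f v \<ge> 0" using assms(2) by (simp add: is_norm_on_def)
  have zero: "\<And>v. v \<in> cvec N \<Longrightarrow> f v = 0 \<longleftrightarrow> v = (\<lambda>_. 0)" using assms(2) by (simp add: is_norm_on_def)
  have homog: "\<And>v c. v \<in> cvec N \<Longrightarrow> f (\<lambda>i. c * v i) = cmod c * f v" using assms(2) by (simp add: is_norm_on_def)
  have tri: "\<And>v w. v \<in> cvec N \<Longrightarrow> w \<in> cvec N \<Longrightarrow> f (\<lambda>i. v i + w i) \<le> f v + f w"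
    using assms(2) by (simp add: is_norm_on_def)
  have perm: "\<And>\<sigma> v. \<sigma> permutes {..<N} \<Longrightarrow> v \<in> cvec N \<Longrightarrow> f (v \<circ> \<sigma>) = f v"
    using assms(3) by (simp add: perm_invariant_def)
  have H: "\<And>v w. v \<in> cvec N \<Longrightarrow> w \<in> cvec N \<Longrightarrow> vsupp v \<inter> vsupp w = {} \<Longrightarrow>
           f (\<lambda>i. v i + w i) = f (pair2 (complex_of_real (f v)) (complex_of_real (f w)))"
    using assms(5) by blast
  have tp: "\<And>a b. a < N \<Longrightarrow> b < N \<Longrightarrow> Transposition.transpose a b permutes {..<N}"
    by (intro permutes_swap_id) auto
  have cv_pair: "\<And>a b. pair2 a b \<in> cvec N" using N3 by (auto simp: cvec_def pair2_def)
  have cv_scale: "\<And>v c. v \<in> cvec N \<Longrightarrow> (\<lambda>i. c * v i) \<in> cvec N" by (auto simp: cvec_def)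
  have cv_zero: "(\<lambda>_. 0) \<in> cvec N" by (auto simp: cvec_def)
  have cv_delta: "\<And>k z. k < N \<Longrightarrow> (\<lambda>i. if i = k then z else 0) \<in> cvec N" by (auto simp: cvec_def)
  have e0: "f (pair2 1 0) = 1"
  proof -
    let ?v = "pair2 1 0"
    have "vsupp (\<lambda>_. 0) = {}" by (simp add: vsupp_def)
    then have A: "f ?v = f (pair2 (complex_of_real (f ?v)) (complex_of_real (f (\<lambda>_. 0))))"
      using H[OF cv_pair cv_zero] by simp
    have B: "f (\<lambda>_. 0) = 0" using zero[OF cv_zero] by simp
    have C: "pair2 (complex_of_real (f ?v)) (complex_of_real 0) = (\<lambda>i. complex_of_real (f ?v) * ?v i)"
      by (auto simp: pair2_def)
    have D: "f (\<lambda>i. complex_of_real (f ?v) * ?v i) = f ?v * f ?v" using homog[OF cv_pair] nonneg[OF cv_pair] by simp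
    have "f ?v = f ?v * f ?v" using A B C D by simp
    moreover have "f ?v \<noteq> 0" using zero[OF cv_pair, of 1 0] by (auto simp: pair2_def fun_eq_iff)
    ultimately show ?thesis by simp
  qed
  have delta: "\<And>k z. k < N \<Longrightarrow> f (\<lambda>i. if i = k then z else 0) = cmod z"
  proof -
    fix k z assume k: "k < N"
    have "f ((\<lambda>i. if i = k then z else 0)) = f ((\<lambda>i. z * (pair2 1 0 \<circ> Transposition.transpose 0 k) i))"
      by (rule arg_cong[where f=f]) (auto simp: pair2_def Transposition.transpose_def fun_eq_iff)
    also have "\<dots> = cmod z * f (pair2 1 0 \<circ> Transposition.transpose 0 k)"
      by (rule homog) (use cv_pair perm tp k in \<open>auto simp: cvec_def pair2_def Transposition.transpose_def\<close>)
    also have "f (pair2 1 0 \<circ> Transposition.transpose 0 k) = 1"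
      using perm[OF tp[OF _ k] cv_pair] e0 N3 by simp
    finally show "f (\<lambda>i. if i = k then z else 0) = cmod z" by simp
  qed
  define g where "g = (\<lambda>x y. f (pair2 (complex_of_real x) (complex_of_real y)))"
  have pair_eq: "f (pair2 a b) = g (cmod a) (cmod b)" for a b
  proof -
    have "f (pair2 a b) = f (\<lambda>i. (\<lambda>i. if i = 0 then a else 0) i + (\<lambda>i. if i = 1 then b else 0) i)"
      by (rule arg_cong[where f=f]) (auto simp: pair2_def fun_eq_iff)
    also have "\<dots> = f (pair2 (complex_of_real (f (\<lambda>i. if i = 0 then a else 0)))
                          (complex_of_real (f (\<lambda>i. if i = 1 then b else 0))))"
      by (rule H) (use N3 in \<open>auto intro!: cv_delta simp: vsupp_def\<close>)
    also have "\<dots> = g (cmod a) (cmod b)" using delta[of 0 a] delta[of 1 b] N3 by (simp add: g_def)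
    finally show ?thesis .
  qed
  have gnn: "\<And>x y. 0 \<le> g x y" using nonneg cv_pair by (simp add: g_def)
  have gcomm: "\<And>x y. g x y = g y x"
  proof -
    fix x y
    have "pair2 (complex_of_real y) (complex_of_real x) = pair2 (complex_of_real x) (complex_of_real y) \<circ> Transposition.transpose 0 1"
      by (auto simp: pair2_def Transposition.transpose_def fun_eq_iff)
    then show "g x y = g y x" using perm[OF tp cv_pair] N3 by (simp add: g_def)
  qed
  have gid: "\<And>x. 0 \<le> x \<Longrightarrow> g x 0 = x"
  proof -
    fix x :: real assume "0 \<le> x"
    have "pair2 (complex_of_real x) (complex_of_real 0) = (\<lambda>i. if i = 0 then complex_of_real x else 0)"
      by (auto simp: pair2_def fun_eq_iff)
    then show "g x 0 = x" using delta[of 0 "complex_of_real x"] N3 \<open>0 \<le> x\<close> by (simp add: g_def)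
  qed
  have ghom: "\<And>t x y. 0 \<le> t \<Longrightarrow> 0 \<le> x \<Longrightarrow> 0 \<le> y \<Longrightarrow> g (t*x) (t*y) = t * g x y"
  proof -
    fix t x y :: real assume "0 \<le> t"
    have "pair2 (complex_of_real (t*x)) (complex_of_real (t*y)) = (\<lambda>i. complex_of_real t * pair2 (complex_of_real x) (complex_of_real y) i)"
      by (auto simp: pair2_def fun_eq_iff)
    then show "g (t*x) (t*y) = t * g x y" using homog[OF cv_pair] \<open>0 \<le> t\<close> by (simp add: g_def)
  qed
  have gmono: "\<And>x x' y. 0 \<le> x \<Longrightarrow> x \<le> x' \<Longrightarrow> 0 \<le> y \<Longrightarrow> g x y \<le> g x' y"
  proof -
    fix x x' y :: real assume x: "0 \<le> x" "x \<le> x'" "0 \<le> y"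
    show "g x y \<le> g x' y"
    proof (cases "x' = 0")
      case True then show ?thesis using x by simp
    next
      case False
      then have x'p: "x' > 0" using x by simp
      define l where "l = (x' + x) / (2 * x')"
      define m where "m = (x' - x) / (2 * x')"
      have l0: "l \<ge> 0" and m0: "m \<ge> 0" using x x'p by (auto simp: l_def m_def)
      have lm: "l + m = 1" using x'p by (simp add: l_def m_def field_simps)
      have lx: "l * x' - m * x' = x" using x'p by (simp add: l_def m_def field_simps)
      have ly: "l * y + m * y = y" using lm by (metis distrib_right mult_1)
      let ?P = "pair2 (complex_of_real x') (complex_of_real y)"
      let ?Q = "pair2 (complex_of_real (- x')) (complex_of_real y)"
      have "pair2 (complex_of_real x) (complex_of_real y) =
            (\<lambda>i. (\<lambda>i. complex_of_real l * ?P i) i + (\<lambda>i. complex_of_real m * ?Q i) i)"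
      proof -
        have "complex_of_real x = complex_of_real l * complex_of_real x' + complex_of_real m * complex_of_real (- x')"
          using arg_cong[OF lx, of complex_of_real] by simp
        moreover have "complex_of_real y = complex_of_real l * complex_of_real y + complex_of_real m * complex_of_real y"
          using arg_cong[OF ly, of complex_of_real] by simp
        ultimately show ?thesis by (auto simp: pair2_def fun_eq_iff)
      qed
      then have "g x y \<le> f (\<lambda>i. complex_of_real l * ?P i) + f (\<lambda>i. complex_of_real m * ?Q i)"
        unfolding g_def using tri[OF cv_scale[OF cv_pair] cv_scale[OF cv_pair]] by metis
      also have "\<dots> = l * f ?P + m * f ?Q" using homog[OF cv_pair] l0 m0 by simp
      also have "f ?Q = g x' y" using pair_eq x x'p by simp
      also have "f ?P = g x' y" by (simp add: g_def)
      finally show ?thesis using lm by (metis distrib_right mult_1)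
    qed
  qed
  have gswap: "g (g a b) c = g (g a c) b" if abc: "0 \<le> a" "0 \<le> b" "0 \<le> c" for a b c
  proof -
    define u :: "nat \<Rightarrow> complex" where "u = (\<lambda>i. if i = 0 then complex_of_real a else if i = 1 then complex_of_real b
                              else if i = 2 then complex_of_real c else 0)"
    have "f u = f (\<lambda>i. pair2 (complex_of_real a) (complex_of_real b) i + (\<lambda>i. if i = 2 then complex_of_real c else 0) i)"
      by (rule arg_cong[where f=f]) (auto simp: u_def pair2_def fun_eq_iff)
    also have "\<dots> = f (pair2 (complex_of_real (f (pair2 (complex_of_real a) (complex_of_real b))))
                          (complex_of_real (f (\<lambda>i. if i = 2 then complex_of_real c else 0))))"
      by (rule H) (use N3 in \<open>auto intro!: cv_delta cv_pair simp: vsupp_def pair2_def cvec_def\<close>)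
    also have "\<dots> = g (g a b) c" using delta[of 2 "complex_of_real c"] N3 abc by (simp add: g_def)
    finally have 1: "f u = g (g a b) c" .
    let ?v = "\<lambda>i. if i = 0 then complex_of_real a else if i = 2 then complex_of_real c else 0"
    have v_eq: "?v = pair2 (complex_of_real a) (complex_of_real c) \<circ> Transposition.transpose 1 2"
      by (auto simp: pair2_def Transposition.transpose_def fun_eq_iff)
    have fv: "f ?v = g a c" using perm[OF tp cv_pair] N3 v_eq by (simp add: g_def)
    have cvv: "?v \<in> cvec N" using N3 by (auto simp: cvec_def)
    have "f u = f (\<lambda>i. ?v i + (\<lambda>i. if i = 1 then complex_of_real b else 0) i)"
      by (rule arg_cong[where f=f]) (auto simp: u_def fun_eq_iff)
    also have "\<dots> = f (pair2 (complex_of_real (f ?v))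
                          (complex_of_real (f (\<lambda>i. if i = 1 then complex_of_real b else 0))))"
      by (rule H) (use N3 cvv in \<open>auto intro!: cv_delta simp: vsupp_def\<close>)
    also have "\<dots> = g (g a c) b" using delta[of 1 "complex_of_real b"] N3 abc fv by (simp add: g_def)
    finally show ?thesis using 1 by simp
  qed
  have gassoc: "\<And>x y z. 0\<le>x \<Longrightarrow> 0\<le>y \<Longrightarrow> 0\<le>z \<Longrightarrow> g (g x y) z = g x (g y z)"
  proof -
    fix x y z :: real assume xyz: "0\<le>x" "0\<le>y" "0\<le>z"
    have "g x (g y z) = g (g y z) x" by (rule gcomm)
    also have "\<dots> = g (g y x) z" using gswap xyz by simp
    also have "\<dots> = g (g x y) z" by (simp add: gcomm[of y x])
    finally show "g (g x y) z = g x (g y z)" by simp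
  qed
  have g11a: "g 1 1 \<noteq> 1" using assms(4) by (simp add: g_def)
  have g11b: "g 1 1 \<le> 2"
  proof -
    have "pair2 1 1 = (\<lambda>i. pair2 1 0 i + pair2 0 1 i)" by (auto simp: pair2_def fun_eq_iff)
    then have "f (pair2 1 1) \<le> f (pair2 1 0) + f (pair2 0 1)" using tri[OF cv_pair cv_pair] by metis
    moreover have "f (pair2 0 1) = 1" using pair_eq[of 0 1] pair_eq[of 1 0] gcomm e0 by simp
    ultimately show ?thesis using e0 by (simp add: g_def)
  qed
  obtain p where p1: "p \<ge> 1" and gp: "\<And>x y. 0\<le>x \<Longrightarrow> 0\<le>y \<Longrightarrow> g x y = (x powr p + y powr p) powr (1/p)"
    using core[of g, OF gnn gcomm gassoc gid ghom gmono g11a g11b] by blast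
  show ?thesis
  proof (intro exI[of _ p] conjI ballI impI)
    show "1 \<le> p" by (rule p1)
  next
    fix c assume c: "c \<in> cvec N"
    define ck where "ck = (\<lambda>k i. if i < k then c i else 0)"
    have ck_cv: "ck k \<in> cvec N" if "k \<le> N" for k using that by (auto simp: ck_def cvec_def)
    have "k \<le> N \<Longrightarrow> f (ck k) = (\<Sum>i<k. cmod (c i) powr p) powr (1 / p)" for k
    proof (induction k)
      case 0
      have "ck 0 = (\<lambda>_. 0)" by (simp add: ck_def)
      then show ?case using zero[OF cv_zero] by simp
    next
      case (Suc k)
      then have k: "k < N" by simp
      have "f (ck (Suc k)) = f (\<lambda>i. ck k i + (\<lambda>i. if i = k then c k else 0) i)"
        by (rule arg_cong[where f=f]) (auto simp: ck_def fun_eq_iff)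
      also have "\<dots> = f (pair2 (complex_of_real (f (ck k))) (complex_of_real (f (\<lambda>i. if i = k then c k else 0))))"
        by (rule H) (use ck_cv k cv_delta in \<open>auto simp: vsupp_def ck_def\<close>)
      also have "\<dots> = g (f (ck k)) (cmod (c k))" using delta[OF k] by (simp add: g_def)
      also have "\<dots> = ((f (ck k)) powr p + cmod (c k) powr p) powr (1/p)"
        using gp nonneg ck_cv k by simp
      also have "(f (ck k)) powr p = (\<Sum>i<k. cmod (c i) powr p)"
        using Suc k p1 by (simp add: powr_powr sum_nonneg)
      finally show ?case by simp
    qed
    moreover have "ck N = c" using c by (auto simp: ck_def cvec_def fun_eq_iff)
    ultimately show "f c = (\<Sum>i<N. cmod (c i) powr p) powr (1 / p)" by auto
  qed
qed

end
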